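(* Let $P\in\Delta$ and define $Q_0\in\Delta$ by $Q_0(x,y,z)=\frac{P(X=x,Y=y)P(X=x,Z=z)}{P(X=x)}$ if $P(X=x)>0$ and $Q_0(x,y,z)=0$ otherwise. Then $Q_0\in\Delta_P$, and $\widetilde{SI}(X:Y;Z)=0$ if and only if $MI_{Q_0}(Y:Z)=0$.
   Context: $X,Y,Z$ are random variables with finite state spaces $\mathcal X,\mathcal Y,\mathcal Z$. $\Delta$ denotes the set of all probability distributions on $\mathcal X\times\mathcal Y\times\mathcal Z$; $P\in\Delta$ is the joint distribution, and a subscript $Q$ means computed w.r.t. $Q\in\Delta$. $\Delta_P=\{Q\in\Delta: Q(X=x,Y=y)=P(X=x,Y=y)\text{ and }Q(X=x,Z=z)=P(X=x,Z=z)\ \forall x,y,z\}$. $CoI_Q(X;Y;Z)=MI_Q(X:Y)-MI_Q(X:Y|Z)$ and $\widetilde{SI}(X:Y;Z)=\max_{Q\in\Delta_P}CoI_Q(X;Y;Z)$. *)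

theory Defs
  imports Complex_Main
begin

text \<open>Joint distributions on the finite product X x Y x Z, represented as pmfs
  (functions to real). Logarithms are base 2 (the base is irrelevant for the statement).\<close>

definition Delta :: "('x::finite \<times> 'y::finite \<times> 'z::finite \<Rightarrow> real) set" where
  "Delta = {Q. (\<forall>w. 0 \<le> Q w) \<and> (\<Sum>w\<in>UNIV. Q w) = 1}"

definition pX :: "('x::finite \<times> 'y::finite \<times> 'z::finite \<Rightarrow> real) \<Rightarrow> 'x \<Rightarrow> real" where
  "pX Q x = (\<Sum>y\<in>UNIV. \<Sum>z\<in>UNIV. Q (x, y, z))"
definition pY :: "('x::finite \<times> 'y::finite \<times> 'z::finite \<Rightarrow> real) \<Rightarrow> 'y \<Rightarrow> real" where
  "pY Q y = (\<Sum>x\<in>UNIV. \<Sum>z\<in>UNIV. Q (x, y, z))"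
definition pZ :: "('x::finite \<times> 'y::finite \<times> 'z::finite \<Rightarrow> real) \<Rightarrow> 'z \<Rightarrow> real" where
  "pZ Q z = (\<Sum>x\<in>UNIV. \<Sum>y\<in>UNIV. Q (x, y, z))"
definition pXY :: "('x::finite \<times> 'y::finite \<times> 'z::finite \<Rightarrow> real) \<Rightarrow> 'x \<Rightarrow> 'y \<Rightarrow> real" where
  "pXY Q x y = (\<Sum>z\<in>UNIV. Q (x, y, z))"
definition pXZ :: "('x::finite \<times> 'y::finite \<times> 'z::finite \<Rightarrow> real) \<Rightarrow> 'x \<Rightarrow> 'z \<Rightarrow> real" where
  "pXZ Q x z = (\<Sum>y\<in>UNIV. Q (x, y, z))"
definition pYZ :: "('x::finite \<times> 'y::finite \<times> 'z::finite \<Rightarrow> real) \<Rightarrow> 'y \<Rightarrow> 'z \<Rightarrow> real" where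
  "pYZ Q y z = (\<Sum>x\<in>UNIV. Q (x, y, z))"

definition MI_XY :: "('x::finite \<times> 'y::finite \<times> 'z::finite \<Rightarrow> real) \<Rightarrow> real" where
  "MI_XY Q = (\<Sum>x\<in>UNIV. \<Sum>y\<in>UNIV.
     if 0 < pXY Q x y then pXY Q x y * log 2 (pXY Q x y / (pX Q x * pY Q y)) else 0)"

definition MI_YZ :: "('x::finite \<times> 'y::finite \<times> 'z::finite \<Rightarrow> real) \<Rightarrow> real" where
  "MI_YZ Q = (\<Sum>y\<in>UNIV. \<Sum>z\<in>UNIV.
     if 0 < pYZ Q y z then pYZ Q y z * log 2 (pYZ Q y z / (pY Q y * pZ Q z)) else 0)"

definition CMI_XY_Z :: "('x::finite \<times> 'y::finite \<times> 'z::finite \<Rightarrow> real) \<Rightarrow> real" where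
  "CMI_XY_Z Q = (\<Sum>x\<in>UNIV. \<Sum>y\<in>UNIV. \<Sum>z\<in>UNIV.
     if 0 < Q (x, y, z) then Q (x, y, z) * log 2 (Q (x, y, z) * pZ Q z / (pXZ Q x z * pYZ Q y z)) else 0)"

definition CoI :: "('x::finite \<times> 'y::finite \<times> 'z::finite \<Rightarrow> real) \<Rightarrow> real" where
  "CoI Q = MI_XY Q - CMI_XY_Z Q"

definition Delta_P :: "('x::finite \<times> 'y::finite \<times> 'z::finite \<Rightarrow> real) \<Rightarrow> ('x \<times> 'y \<times> 'z \<Rightarrow> real) set" where
  "Delta_P P = {Q \<in> Delta. (\<forall>x y. pXY Q x y = pXY P x y) \<and> (\<forall>x z. pXZ Q x z = pXZ P x z)}"

text \<open>SI-tilde: the maximum of CoI over Delta_P (attained, by compactness; written as Sup).\<close>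
definition SI_tilde :: "('x::finite \<times> 'y::finite \<times> 'z::finite \<Rightarrow> real) \<Rightarrow> real" where
  "SI_tilde P = (SUP Q\<in>Delta_P P. CoI Q)"

definition Q0 :: "('x::finite \<times> 'y::finite \<times> 'z::finite \<Rightarrow> real) \<Rightarrow> ('x \<times> 'y \<times> 'z \<Rightarrow> real)" where
  "Q0 P = (\<lambda>(x, y, z). if 0 < pX P x then pXY P x y * pXZ P x z / pX P x else 0)"

end

theory Submission
  imports Defs
begin

lemma gibbs_pt:
  fixes q r :: real
  assumes "0 \<le> q" "0 \<le> r" "0 < q \<Longrightarrow> 0 < r"
  shows "(if 0 < q then q * log 2 (r / q) else 0) \<le> (r - q) / ln 2"
proof (cases "0 < q")
  case True
  then have r: "0 < r" using assms by auto
  have "ln (r/q) \<le> r/q - 1" using True r by (intro ln_le_minus_one) simp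
  then have "q * ln (r/q) \<le> q * (r/q - 1)" using True by (intro mult_left_mono) auto
  also have "\<dots> = r - q" using True by (simp add: field_simps)
  finally have "q * ln (r/q) / ln 2 \<le> (r - q) / ln 2" by (intro divide_right_mono) auto
  then show ?thesis using True by (simp add: log_def)
next
  case False
  then show ?thesis using assms by simp
qed

lemma gibbs_pt_eq:
  fixes q r :: real
  assumes "0 \<le> q" "0 \<le> r" "0 < q \<Longrightarrow> 0 < r"
    and "(if 0 < q then q * log 2 (r / q) else 0) = (r - q) / ln 2"
  shows "q = r"
proof (cases "0 < q")
  case True
  then have r: "0 < r" using assms by auto
  have "q * ln (r/q) / ln 2 = (r - q) / ln 2" using assms(4) True by (simp add: log_def)
  then have "q * ln (r/q) = r - q" by simp
  then have "ln (r/q) = r/q - 1" using True by (simp add: field_simps)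
  then have "r/q = 1" using True r by (intro ln_eq_minus_one) auto
  then show ?thesis using True by simp
next
  case False
  then show ?thesis using assms by simp
qed

lemma guard_conv:
  fixes f :: "'a::finite \<Rightarrow> real"
  assumes "\<And>z. 0 \<le> f z"
  shows "(if 0 < sum f UNIV then sum f UNIV * c else 0) = (\<Sum>z\<in>UNIV. if 0 < f z then f z * c else 0)"
proof (cases "0 < sum f UNIV")
  case True
  have "sum f UNIV * c = (\<Sum>z\<in>UNIV. f z * c)" by (simp add: sum_distrib_right)
  also have "\<dots> = (\<Sum>z\<in>UNIV. if 0 < f z then f z * c else 0)"
    by (rule sum.cong) (use assms in \<open>auto simp: order_le_less\<close>)
  finally show ?thesis using True by simp
next
  case False
  moreover have "0 \<le> sum f UNIV" using assms by (simp add: sum_nonneg)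
  ultimately have "sum f UNIV = 0" by linarith
  then have "\<forall>z. f z = 0" using assms by (simp add: sum_nonneg_eq_0_iff)
  then show ?thesis by simp
qed

lemma sum3:
  fixes f :: "'x::finite \<times> 'y::finite \<times> 'z::finite \<Rightarrow> real"
  shows "(\<Sum>w\<in>UNIV. f w) = (\<Sum>x\<in>UNIV. \<Sum>y\<in>UNIV. \<Sum>z\<in>UNIV. f (x, y, z))"
  by (simp add: sum.cartesian_product flip: UNIV_Times_UNIV)

lemma MI_XY_alt:
  fixes Q :: "'x::finite \<times> 'y::finite \<times> 'z::finite \<Rightarrow> real"
  assumes "\<And>w. 0 \<le> Q w"
  shows "MI_XY Q = (\<Sum>x\<in>UNIV. \<Sum>y\<in>UNIV. \<Sum>z\<in>UNIV. if 0 < Q (x,y,z) then Q (x,y,z) * log 2 (pXY Q x y / (pX Q x * pY Q y)) else 0)"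
  unfolding MI_XY_def
  apply (intro sum.cong refl)
  apply (subst (1 2) pXY_def)
  apply (rule guard_conv)
  using assms by auto

lemma MI_YZ_alt:
  fixes Q :: "'x::finite \<times> 'y::finite \<times> 'z::finite \<Rightarrow> real"
  assumes "\<And>w. 0 \<le> Q w"
  shows "MI_YZ Q = (\<Sum>y\<in>UNIV. \<Sum>z\<in>UNIV. \<Sum>x\<in>UNIV. if 0 < Q (x,y,z) then Q (x,y,z) * log 2 (pYZ Q y z / (pY Q y * pZ Q z)) else 0)"
  unfolding MI_YZ_def
  apply (intro sum.cong refl)
  apply (subst (1 2) pYZ_def)
  apply (rule guard_conv)
  using assms by auto

lemma le_pXY: "(\<And>w. 0 \<le> Q w) \<Longrightarrow> Q (x,y,z) \<le> pXY Q x y"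
  unfolding pXY_def by (rule member_le_sum[where f="\<lambda>z. Q (x,y,z)", simplified]) auto
lemma le_pXZ: "(\<And>w. 0 \<le> Q w) \<Longrightarrow> Q (x,y,z) \<le> pXZ Q x z"
  unfolding pXZ_def by (rule member_le_sum[where f="\<lambda>y. Q (x,y,z)", simplified]) auto
lemma le_pYZ: "(\<And>w. 0 \<le> Q w) \<Longrightarrow> Q (x,y,z) \<le> pYZ Q y z"
  unfolding pYZ_def by (rule member_le_sum[where f="\<lambda>x. Q (x,y,z)", simplified]) auto

lemma pX_XY: "pX Q x = (\<Sum>y\<in>UNIV. pXY Q x y)" by (simp add: pX_def pXY_def)
lemma pY_XY: "pY Q y = (\<Sum>x\<in>UNIV. pXY Q x y)" by (simp add: pY_def pXY_def)
lemma pZ_XZ: "pZ Q z = (\<Sum>x\<in>UNIV. pXZ Q x z)" by (simp add: pZ_def pXZ_def)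
lemma pX_XZ: "pX Q x = (\<Sum>z\<in>UNIV. pXZ Q x z)"
  unfolding pX_def pXZ_def by (rule sum.swap)
lemma pY_YZ: "pY Q y = (\<Sum>z\<in>UNIV. pYZ Q y z)"
  unfolding pY_def pYZ_def by (rule sum.swap)
lemma pZ_YZ: "pZ Q z = (\<Sum>y\<in>UNIV. pYZ Q y z)"
  unfolding pZ_def pYZ_def by (rule sum.swap)

lemma nn_pXY: "(\<And>w. 0 \<le> (Q::_\<Rightarrow>real) w) \<Longrightarrow> 0 \<le> pXY Q x y" unfolding pXY_def by (simp add: sum_nonneg)
lemma nn_pXZ: "(\<And>w. 0 \<le> (Q::_\<Rightarrow>real) w) \<Longrightarrow> 0 \<le> pXZ Q x z" unfolding pXZ_def by (simp add: sum_nonneg)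
lemma nn_pYZ: "(\<And>w. 0 \<le> (Q::_\<Rightarrow>real) w) \<Longrightarrow> 0 \<le> pYZ Q y z" unfolding pYZ_def by (simp add: sum_nonneg)

lemma pXY_le_pX: "(\<And>w. 0 \<le> (Q::_\<Rightarrow>real) w) \<Longrightarrow> pXY Q x y \<le> pX Q x"
  unfolding pX_XY by (rule member_le_sum[where f="\<lambda>y. pXY Q x y", simplified]) (auto intro: nn_pXY)
lemma pXY_le_pY: "(\<And>w. 0 \<le> (Q::_\<Rightarrow>real) w) \<Longrightarrow> pXY Q x y \<le> pY Q y"
  unfolding pY_XY by (rule member_le_sum[where f="\<lambda>x. pXY Q x y", simplified]) (auto intro: nn_pXY)
lemma pXZ_le_pZ: "(\<And>w. 0 \<le> (Q::_\<Rightarrow>real) w) \<Longrightarrow> pXZ Q x z \<le> pZ Q z"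
  unfolding pZ_XZ by (rule member_le_sum[where f="\<lambda>x. pXZ Q x z", simplified]) (auto intro: nn_pXZ)
lemma pYZ_le_pY: "(\<And>w. 0 \<le> (Q::_\<Rightarrow>real) w) \<Longrightarrow> pYZ Q y z \<le> pY Q y"
  unfolding pY_YZ by (rule member_le_sum[where f="\<lambda>z. pYZ Q y z", simplified]) (auto intro: nn_pYZ)
lemma pYZ_le_pZ: "(\<And>w. 0 \<le> (Q::_\<Rightarrow>real) w) \<Longrightarrow> pYZ Q y z \<le> pZ Q z"
  unfolding pZ_YZ by (rule member_le_sum[where f="\<lambda>y. pYZ Q y z", simplified]) (auto intro: nn_pYZ)

definition Rf :: "('x::finite \<times> 'y::finite \<times> 'z::finite \<Rightarrow> real) \<Rightarrow> 'x \<Rightarrow> 'y \<Rightarrow> 'z \<Rightarrow> real" where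
  "Rf Q x y z = pXY Q x y * pXZ Q x z * pYZ Q y z / (pX Q x * pY Q y * pZ Q z)"

lemma log_alg:
  fixes a b c d e f q :: real
  assumes "0<a" "0<b" "0<c" "0<d" "0<e" "0<f" "0<q"
  shows "log 2 (a / (d * e)) - log 2 (q * f / (b * c)) = log 2 (a * b * c / (d * e * f) / q)"
  using assms by (simp add: log_mult log_divide)

lemma CoI_eq:
  fixes Q :: "'x::finite \<times> 'y::finite \<times> 'z::finite \<Rightarrow> real"
  assumes nn: "\<And>w. 0 \<le> Q w"
  shows "CoI Q = (\<Sum>x\<in>UNIV. \<Sum>y\<in>UNIV. \<Sum>z\<in>UNIV. if 0 < Q (x,y,z) then Q (x,y,z) * log 2 (Rf Q x y z / Q (x,y,z)) else 0)"
  unfolding CoI_def MI_XY_alt[OF nn] CMI_XY_Z_def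
  apply (simp only: sum_subtractf[symmetric])
proof (intro sum.cong refl)
  fix x y z
  show "(if 0 < Q (x, y, z) then Q (x, y, z) * log 2 (pXY Q x y / (pX Q x * pY Q y)) else 0) -
         (if 0 < Q (x, y, z) then Q (x, y, z) * log 2 (Q (x, y, z) * pZ Q z / (pXZ Q x z * pYZ Q y z)) else 0) =
         (if 0 < Q (x, y, z) then Q (x, y, z) * log 2 (Rf Q x y z / Q (x, y, z)) else 0)"
  proof (cases "0 < Q (x,y,z)")
    case True
    have a: "0 < pXY Q x y" using le_pXY[of Q x y z, OF nn] nn True by linarith
    have b: "0 < pXZ Q x z" using le_pXZ[of Q x y z, OF nn] nn True by linarith
    have c: "0 < pYZ Q y z" using le_pYZ[of Q x y z, OF nn] nn True by linarith
    have d: "0 < pX Q x" using pXY_le_pX[of Q x y, OF nn] nn a by linarith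
    have e: "0 < pY Q y" using pXY_le_pY[of Q x y, OF nn] nn a by linarith
    have f: "0 < pZ Q z" using pXZ_le_pZ[of Q x z, OF nn] nn b by linarith
    show ?thesis using True log_alg[OF a b c d e f True]
      by (simp add: Rf_def right_diff_distrib[symmetric])
  qed simp
qed

lemma Rf_nn: "(\<And>w. 0 \<le> (Q::_\<Rightarrow>real) w) \<Longrightarrow> 0 \<le> Rf Q x y z"
  unfolding Rf_def
  by (intro divide_nonneg_nonneg mult_nonneg_nonneg nn_pXY nn_pXZ nn_pYZ)
     (auto simp: pX_XY pY_XY pZ_XZ intro!: sum_nonneg nn_pXY nn_pXZ)

lemma Rf_pos: assumes nn: "\<And>w. 0 \<le> (Q::_\<Rightarrow>real) w" and True: "0 < Q (x,y,z)"
  shows "0 < Rf Q x y z"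
proof -
    have a: "0 < pXY Q x y" using le_pXY[of Q x y z, OF nn] nn True by linarith
    have b: "0 < pXZ Q x z" using le_pXZ[of Q x y z, OF nn] nn True by linarith
    have c: "0 < pYZ Q y z" using le_pYZ[of Q x y z, OF nn] nn True by linarith
    have d: "0 < pX Q x" using pXY_le_pX[of Q x y, OF nn] nn a by linarith
    have e: "0 < pY Q y" using pXY_le_pY[of Q x y, OF nn] nn a by linarith
    have f: "0 < pZ Q z" using pXZ_le_pZ[of Q x z, OF nn] nn b by linarith
    show ?thesis unfolding Rf_def using a b c d e f by simp
qed

lemma CoI_le:
  fixes Q :: "'x::finite \<times> 'y::finite \<times> 'z::finite \<Rightarrow> real"
  assumes "Q \<in> Delta"
  shows "CoI Q \<le> ((\<Sum>x\<in>UNIV. \<Sum>y\<in>UNIV. \<Sum>z\<in>UNIV. Rf Q x y z) - 1) / ln 2"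
proof -
  have nn: "\<And>w. 0 \<le> Q w" and s1: "(\<Sum>x\<in>UNIV. \<Sum>y\<in>UNIV. \<Sum>z\<in>UNIV. Q (x,y,z)) = 1"
    using assms by (auto simp: Delta_def sum3)
  have "CoI Q \<le> (\<Sum>x\<in>UNIV. \<Sum>y\<in>UNIV. \<Sum>z\<in>UNIV. (Rf Q x y z - Q (x,y,z)) / ln 2)"
    unfolding CoI_eq[OF nn]
    by (intro sum_mono gibbs_pt nn Rf_nn Rf_pos)
  also have "\<dots> = ((\<Sum>x\<in>UNIV. \<Sum>y\<in>UNIV. \<Sum>z\<in>UNIV. Rf Q x y z) - (\<Sum>x\<in>UNIV. \<Sum>y\<in>UNIV. \<Sum>z\<in>UNIV. Q (x,y,z))) / ln 2"
    by (simp add: sum_divide_distrib[symmetric] sum_subtractf)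
  finally show ?thesis using s1 by simp
qed

lemma Delta_nn: "Q \<in> Delta \<Longrightarrow> 0 \<le> Q w" unfolding Delta_def by (cases w) auto

lemma Delta_sum: "(Q::'x::finite \<times> 'y::finite \<times> 'z::finite \<Rightarrow> real) \<in> Delta \<Longrightarrow>
   (\<Sum>x\<in>UNIV. \<Sum>y\<in>UNIV. \<Sum>z\<in>UNIV. Q (x,y,z)) = 1"
  by (simp add: Delta_def sum3)

lemma Q0_eq:
  assumes "P \<in> Delta"
  shows "Q0 P (x,y,z) = pXY P x y * pXZ P x z / pX P x"
proof -
  have "0 \<le> pX P x" unfolding pX_def using assms by (auto intro!: sum_nonneg simp: Delta_def)
  then show ?thesis unfolding Q0_def by auto
qed

lemma Q0_in:
  fixes P :: "'x::finite \<times> 'y::finite \<times> 'z::finite \<Rightarrow> real"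
  assumes P: "P \<in> Delta"
  shows "Q0 P \<in> Delta_P P"
proof -
  have nn: "\<And>w. 0 \<le> P w" by (rule Delta_nn[OF P])
  have pXnn: "\<And>x. 0 \<le> pX P x" unfolding pX_def using nn by (auto intro!: sum_nonneg)
  have Q0nn: "\<And>w. 0 \<le> Q0 P w"
    unfolding Q0_def using nn by (auto intro!: mult_nonneg_nonneg divide_nonneg_nonneg nn_pXY nn_pXZ)
  have xy: "pXY (Q0 P) x y = pXY P x y" for x y
  proof -
    have "pXY (Q0 P) x y = (\<Sum>z\<in>UNIV. pXY P x y * pXZ P x z / pX P x)"
      unfolding pXY_def[of "Q0 P"] using Q0_eq[OF P] by simp
    also have "\<dots> = pXY P x y * pX P x / pX P x"
      by (simp add: pX_XZ sum_divide_distrib[symmetric] sum_distrib_left)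
    also have "\<dots> = pXY P x y"
    proof (cases "pX P x = 0")
      case True
      then show ?thesis using pXY_le_pX[of P x y, OF nn] nn_pXY[of P x y, OF nn] by simp
    qed simp
    finally show ?thesis .
  qed
  have xz: "pXZ (Q0 P) x z = pXZ P x z" for x z
  proof -
    have "pXZ (Q0 P) x z = (\<Sum>y\<in>UNIV. pXY P x y * pXZ P x z / pX P x)"
      unfolding pXZ_def[of "Q0 P"] using Q0_eq[OF P] by simp
    also have "\<dots> = pX P x * pXZ P x z / pX P x"
      by (simp add: pX_XY sum_divide_distrib[symmetric] sum_distrib_right)
    also have "\<dots> = pXZ P x z"
    proof (cases "pX P x = 0")
      case True
      have "pXZ P x z \<le> pX P x" unfolding pX_XZ
        by (rule member_le_sum[where f="\<lambda>z. pXZ P x z", simplified]) (auto intro: nn_pXZ nn)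
      then show ?thesis using True nn_pXZ[of P x z, OF nn] by simp
    qed simp
    finally show ?thesis .
  qed
  have "(\<Sum>x\<in>UNIV. \<Sum>y\<in>UNIV. \<Sum>z\<in>UNIV. Q0 P (x,y,z)) = (\<Sum>x\<in>UNIV. \<Sum>y\<in>UNIV. pXY P x y)"
    using xy by (simp add: pXY_def)
  also have "\<dots> = 1" using Delta_sum[OF P] by (simp add: pXY_def)
  finally have "Q0 P \<in> Delta" using Q0nn by (simp add: Delta_def sum3)
  then show ?thesis using xy xz by (simp add: Delta_P_def)
qed

lemma DP_marg:
  assumes "Q \<in> Delta_P P"
  shows "pXY Q = pXY P" "pXZ Q = pXZ P" "pX Q = pX P" "pY Q = pY P" "pZ Q = pZ P" "Q \<in> Delta"
  using assms by (auto simp: Delta_P_def fun_eq_iff pX_XY pY_XY pZ_XZ)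

lemma ratio_le1: "0 \<le> (a::real) \<Longrightarrow> a \<le> b \<Longrightarrow> a / b \<le> 1"
  by (cases "b = 0") (auto simp: divide_le_eq_1)

lemma Rf_le1: assumes nn: "\<And>w. 0 \<le> (Q::_\<Rightarrow>real) w" shows "Rf Q x y z \<le> 1"
proof -
  have "Rf Q x y z = (pXY Q x y / pX Q x) * (pXZ Q x z / pZ Q z) * (pYZ Q y z / pY Q y)"
    unfolding Rf_def by (simp add: divide_inverse inverse_mult_distrib mult_ac)
  also have "\<dots> \<le> 1"
    by (intro mult_le_one ratio_le1 mult_nonneg_nonneg divide_nonneg_nonneg nn_pXY nn_pXZ nn_pYZ
        pXY_le_pX pXZ_le_pZ pYZ_le_pY nn order_trans[OF nn_pXY pXY_le_pX] order_trans[OF nn_pXZ pXZ_le_pZ]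
        order_trans[OF nn_pYZ pYZ_le_pY])
  finally show ?thesis .
qed

lemma Rf_factor:
  "Rf Q x y z = (pXY Q x y * pXZ Q x z / pX Q x) * (pYZ Q y z / (pY Q y * pZ Q z))"
  unfolding Rf_def by (simp add: divide_inverse inverse_mult_distrib mult_ac)

lemma CoI_bdd:
  fixes P :: "'x::finite \<times> 'y::finite \<times> 'z::finite \<Rightarrow> real"
  shows "bdd_above (CoI ` Delta_P P)"
proof (rule bdd_aboveI2)
  fix Q assume Q: "Q \<in> Delta_P P"
  then have D: "Q \<in> Delta" by (simp add: Delta_P_def)
  have "CoI Q \<le> ((\<Sum>x\<in>UNIV. \<Sum>y\<in>UNIV. \<Sum>z\<in>UNIV. Rf Q x y z) - 1) / ln 2" by (rule CoI_le[OF D])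
  also have "\<dots> \<le> ((\<Sum>x\<in>(UNIV::'x set). \<Sum>y\<in>(UNIV::'y set). \<Sum>z\<in>(UNIV::'z set). 1::real) - 1) / ln 2"
    by (intro divide_right_mono diff_right_mono sum_mono Rf_le1 Delta_nn[OF D]) auto
  finally show "CoI Q \<le> ((\<Sum>x\<in>(UNIV::'x set). \<Sum>y\<in>(UNIV::'y set). \<Sum>z\<in>(UNIV::'z set). 1::real) - 1) / ln 2" .
qed

lemma sumYZ: "(Q::'x::finite \<times> 'y::finite \<times> 'z::finite \<Rightarrow> real) \<in> Delta \<Longrightarrow>
   (\<Sum>y\<in>UNIV. \<Sum>z\<in>UNIV. pYZ Q y z) = 1"
proof -
  assume D: "Q \<in> Delta"
  have "(\<Sum>y\<in>UNIV. \<Sum>z\<in>UNIV. pYZ Q y z) = (\<Sum>y\<in>UNIV. \<Sum>x\<in>UNIV. \<Sum>z\<in>UNIV. Q (x,y,z))"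
    unfolding pYZ_def by (intro sum.cong refl) (rule sum.swap)
  also have "\<dots> = 1" using Delta_sum[OF D] by (subst sum.swap) simp
  finally show ?thesis .
qed

lemma sumY: "(Q::'x::finite \<times> 'y::finite \<times> 'z::finite \<Rightarrow> real) \<in> Delta \<Longrightarrow> (\<Sum>y\<in>UNIV. pY Q y) = 1"
  using sumYZ by (simp add: pY_YZ)

lemma sumZ: "(Q::'x::finite \<times> 'y::finite \<times> 'z::finite \<Rightarrow> real) \<in> Delta \<Longrightarrow> (\<Sum>z\<in>UNIV. pZ Q z) = 1"
  unfolding pZ_YZ by (subst sum.swap) (rule sumYZ)

lemma MI_Q0:
  fixes P :: "'x::finite \<times> 'y::finite \<times> 'z::finite \<Rightarrow> real"
  assumes P: "P \<in> Delta"
  shows "0 \<le> MI_YZ (Q0 P)"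
    and "MI_YZ (Q0 P) = 0 \<Longrightarrow> pYZ (Q0 P) y0 z0 = pY P y0 * pZ P z0"
proof -
  define Q where "Q = Q0 P"
  have QD: "Q \<in> Delta_P P" unfolding Q_def by (rule Q0_in[OF P])
  note M = DP_marg[OF QD]
  have nn: "\<And>w. 0 \<le> Q w" using M(6) by (rule Delta_nn)
  have Pnn: "\<And>w. 0 \<le> P w" using P by (rule Delta_nn)
  define q where "q y z = pYZ Q y z" for y z
  define r where "r y z = pY P y * pZ P z" for y z
  define G where "G y z = (if 0 < q y z then q y z * log 2 (r y z / q y z) else 0)" for y z
  have qnn: "0 \<le> q y z" for y z unfolding q_def by (rule nn_pYZ[OF nn])
  have rnn: "0 \<le> r y z" for y z unfolding r_def pY_def pZ_def
    using Pnn by (intro mult_nonneg_nonneg sum_nonneg) auto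
  have qr: "0 < q y z \<Longrightarrow> 0 < r y z" for y z
  proof -
    assume h: "0 < q y z"
    have "0 < pY Q y" using pYZ_le_pY[of Q y z, OF nn] h unfolding q_def by linarith
    moreover have "0 < pZ Q z" using pYZ_le_pZ[of Q y z, OF nn] h unfolding q_def by linarith
    ultimately show "0 < r y z" unfolding r_def using M by simp
  qed
  have MIe: "MI_YZ Q = - (\<Sum>y\<in>UNIV. \<Sum>z\<in>UNIV. G y z)"
    unfolding MI_YZ_def sum_negf[symmetric]
  proof (intro sum.cong refl)
    fix y z
    show "(if 0 < pYZ Q y z then pYZ Q y z * log 2 (pYZ Q y z / (pY Q y * pZ Q z)) else 0) = - G y z"
    proof (cases "0 < q y z")
      case True
      have "0 < r y z" using qr True .
      then show ?thesis using True unfolding G_def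
        by (simp add: q_def[symmetric] M r_def[symmetric] log_divide algebra_simps)
    qed (simp add: G_def q_def)
  qed
  have Gle: "G y z \<le> (r y z - q y z) / ln 2" for y z
    unfolding G_def by (rule gibbs_pt[OF qnn rnn qr])
  have sq: "(\<Sum>y\<in>UNIV. \<Sum>z\<in>UNIV. q y z) = 1" unfolding q_def by (rule sumYZ[OF M(6)])
  have sr: "(\<Sum>y\<in>UNIV. \<Sum>z\<in>UNIV. r y z) = 1"
    unfolding r_def using sumY[OF P] sumZ[OF P] by (simp add: sum_product[symmetric])
  have "(\<Sum>y\<in>UNIV. \<Sum>z\<in>UNIV. (r y z - q y z) / ln 2) = 0"
    using sq sr by (simp add: sum_divide_distrib[symmetric] sum_subtractf)
  then have main: "(\<Sum>y\<in>UNIV. \<Sum>z\<in>UNIV. (r y z - q y z) / ln 2 - G y z) = MI_YZ Q"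
    unfolding MIe by (simp add: sum_subtractf)
  have gnn: "0 \<le> (r y z - q y z) / ln 2 - G y z" for y z using Gle[of y z] by simp
  show "0 \<le> MI_YZ (Q0 P)" unfolding Q_def[symmetric] main[symmetric]
    by (intro sum_nonneg gnn)
  assume "MI_YZ (Q0 P) = 0"
  then have "(\<Sum>y\<in>UNIV. \<Sum>z\<in>UNIV. (r y z - q y z) / ln 2 - G y z) = 0" using main Q_def by simp
  then have "\<forall>y\<in>UNIV. (\<Sum>z\<in>UNIV. (r y z - q y z) / ln 2 - G y z) = 0"
    by (subst (asm) sum_nonneg_eq_0_iff) (auto intro: sum_nonneg gnn)
  then have "(\<Sum>z\<in>UNIV. (r y0 z - q y0 z) / ln 2 - G y0 z) = 0" by simp
  then have "\<forall>z\<in>UNIV. (r y0 z - q y0 z) / ln 2 - G y0 z = 0"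
    by (subst (asm) sum_nonneg_eq_0_iff) (use Gle in auto)
  then have h: "(r y0 z0 - q y0 z0) / ln 2 - G y0 z0 = 0" by simp
  have "q y0 z0 = r y0 z0"
  proof (rule gibbs_pt_eq[OF qnn rnn qr])
    have "G y0 z0 = (r y0 z0 - q y0 z0) / ln 2" using h by linarith
    then show "(if 0 < q y0 z0 then q y0 z0 * log 2 (r y0 z0 / q y0 z0) else 0) = (r y0 z0 - q y0 z0) / ln 2"
      unfolding G_def .
  qed
  then show "pYZ (Q0 P) y0 z0 = pY P y0 * pZ P z0" by (simp add: q_def r_def Q_def)
qed

lemma swap3: "(\<Sum>y\<in>UNIV. \<Sum>z\<in>UNIV. \<Sum>x\<in>UNIV. (f x y z::real)) = (\<Sum>x\<in>UNIV. \<Sum>y\<in>UNIV. \<Sum>z\<in>UNIV. f x y z)"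
proof -
  have "(\<Sum>y\<in>UNIV. \<Sum>z\<in>UNIV. \<Sum>x\<in>UNIV. f x y z) = (\<Sum>y\<in>UNIV. \<Sum>x\<in>UNIV. \<Sum>z\<in>UNIV. f x y z)"
    by (intro sum.cong refl) (rule sum.swap)
  also have "\<dots> = (\<Sum>x\<in>UNIV. \<Sum>y\<in>UNIV. \<Sum>z\<in>UNIV. f x y z)" by (rule sum.swap)
  finally show ?thesis .
qed

lemma CoI_Q0:
  fixes P :: "'x::finite \<times> 'y::finite \<times> 'z::finite \<Rightarrow> real"
  assumes P: "P \<in> Delta"
  shows "CoI (Q0 P) = MI_YZ (Q0 P)"
proof -
  define Q where "Q = Q0 P"
  have QD: "Q \<in> Delta_P P" unfolding Q_def by (rule Q0_in[OF P])
  note M = DP_marg[OF QD]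
  have nn: "\<And>w. 0 \<le> Q w" using M(6) by (rule Delta_nn)
  have e2: "MI_YZ Q = (\<Sum>x\<in>UNIV. \<Sum>y\<in>UNIV. \<Sum>z\<in>UNIV. if 0 < Q (x,y,z) then Q (x,y,z) * log 2 (pYZ Q y z / (pY Q y * pZ Q z)) else 0)"
    unfolding MI_YZ_alt[OF nn] by (rule swap3)
  have "CoI Q = MI_YZ Q"
    unfolding CoI_eq[OF nn] e2
  proof (intro sum.cong refl)
    fix x y z
    show "(if 0 < Q (x, y, z) then Q (x, y, z) * log 2 (Rf Q x y z / Q (x, y, z)) else 0) =
          (if 0 < Q (x, y, z) then Q (x, y, z) * log 2 (pYZ Q y z / (pY Q y * pZ Q z)) else 0)"
    proof (cases "0 < Q (x,y,z)")
      case True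
      have q: "Q (x,y,z) = pXY P x y * pXZ P x z / pX P x" unfolding Q_def by (rule Q0_eq[OF P])
      have "Rf Q x y z = Q (x,y,z) * (pYZ Q y z / (pY Q y * pZ Q z))"
        by (simp only: Rf_factor M q)
      then have "Rf Q x y z / Q (x,y,z) = pYZ Q y z / (pY Q y * pZ Q z)" using True by simp
      then show ?thesis by simp
    qed simp
  qed
  then show ?thesis unfolding Q_def .
qed

lemma CoI_le0:
  fixes P :: "'x::finite \<times> 'y::finite \<times> 'z::finite \<Rightarrow> real"
  assumes P: "P \<in> Delta" and ind: "\<And>y z. pYZ (Q0 P) y z = pY P y * pZ P z"
    and QD: "Q \<in> Delta_P P"
  shows "CoI Q \<le> 0"
proof -
  note M = DP_marg[OF QD]
  have nn: "\<And>w. 0 \<le> Q w" using M(6) by (rule Delta_nn)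
  have Pnn: "\<And>w. 0 \<le> P w" using P by (rule Delta_nn)
  have inner: "(\<Sum>x\<in>UNIV. Rf Q x y z) \<le> pYZ Q y z" for y z
  proof -
    have "(\<Sum>x\<in>UNIV. Rf Q x y z) = (\<Sum>x\<in>UNIV. pXY P x y * pXZ P x z / pX P x) * (pYZ Q y z / (pY P y * pZ P z))"
      by (simp only: Rf_factor M sum_distrib_right)
    also have "(\<Sum>x\<in>UNIV. pXY P x y * pXZ P x z / pX P x) = pYZ (Q0 P) y z"
      unfolding pYZ_def[of "Q0 P"] using Q0_eq[OF P] by simp
    also have "\<dots> = pY P y * pZ P z" by (rule ind)
    also have "pY P y * pZ P z * (pYZ Q y z / (pY P y * pZ P z)) \<le> pYZ Q y z"
      by (cases "pY P y * pZ P z = 0") (auto simp: nn_pYZ[OF nn])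
    finally show ?thesis .
  qed
  have "(\<Sum>x\<in>UNIV. \<Sum>y\<in>UNIV. \<Sum>z\<in>UNIV. Rf Q x y z) = (\<Sum>y\<in>UNIV. \<Sum>z\<in>UNIV. \<Sum>x\<in>UNIV. Rf Q x y z)"
    by (rule swap3[symmetric])
  also have "\<dots> \<le> (\<Sum>y\<in>UNIV. \<Sum>z\<in>UNIV. pYZ Q y z)" by (intro sum_mono inner)
  also have "\<dots> = 1" by (rule sumYZ[OF M(6)])
  finally have s: "(\<Sum>x\<in>UNIV. \<Sum>y\<in>UNIV. \<Sum>z\<in>UNIV. Rf Q x y z) \<le> 1" .
  have "CoI Q \<le> ((\<Sum>x\<in>UNIV. \<Sum>y\<in>UNIV. \<Sum>z\<in>UNIV. Rf Q x y z) - 1) / ln 2" by (rule CoI_le[OF M(6)])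
  also have "\<dots> \<le> 0" using s by (intro divide_nonpos_pos) auto
  finally show ?thesis .
qed

theorem mainTheorem6:
  fixes P :: "'x::finite \<times> 'y::finite \<times> 'z::finite \<Rightarrow> real"
  assumes "P \<in> Delta"
  shows "Q0 P \<in> Delta_P P \<and> (SI_tilde P = 0 \<longleftrightarrow> MI_YZ (Q0 P) = 0)"
proof -
  have Q0in: "Q0 P \<in> Delta_P P" by (rule Q0_in[OF assms])
  have up: "CoI (Q0 P) \<le> SI_tilde P"
    unfolding SI_tilde_def by (rule cSUP_upper[OF Q0in CoI_bdd])
  have mi: "0 \<le> MI_YZ (Q0 P)" by (rule MI_Q0(1)[OF assms])
  have "SI_tilde P = 0 \<longleftrightarrow> MI_YZ (Q0 P) = 0"
  proof
    assume "SI_tilde P = 0"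
    then show "MI_YZ (Q0 P) = 0" using up mi CoI_Q0[OF assms] by linarith
  next
    assume h: "MI_YZ (Q0 P) = 0"
    have ind: "\<And>y z. pYZ (Q0 P) y z = pY P y * pZ P z" by (rule MI_Q0(2)[OF assms h])
    have "SI_tilde P \<le> 0"
      unfolding SI_tilde_def using Q0in by (intro cSUP_least CoI_le0[OF assms ind]) auto
    then show "SI_tilde P = 0" using up h CoI_Q0[OF assms] by linarith
  qed
  then show ?thesis using Q0in by simp
qed

end
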